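(* Let $G(V_1,V_2,E)$ be a $(2,d,\epsilon)$-expander with $\epsilon\le 1/4$, and let $\mathbf{A}\in\{0,1\}^{m\times n}$ be its bi-adjacency matrix ($n=|V_1|$, $m=|V_2|$). Let $\mathbf{w}\in\mathbb{R}^n$ satisfy $\mathbf{A}\mathbf{w}=\mathbf{0}$, and let $S=\{i\}$ be any singleton with $i\in\{1,\dots,n\}$. Then $$\|\mathbf{w}_S\|_1\le 2\epsilon\,\|\mathbf{w}_{S^c}\|_1 .$$
   Context: A bipartite graph $G(X,Y,H)$ has vertex classes $X$ (left) and $Y$ (right) and edge set $H\subset X\times Y$. Its bi-adjacency matrix is the $|Y|\times|X|$ $0/1$ matrix whose column $j$ corresponds to left vertex $j\in X$, row $i$ to right vertex $i\in Y$, with entry $1$ iff the two vertices are adjacent. $G$ is left $d$-regular if every vertex of $X$ has degree $d$. A left $d$-regular bipartite graph is a $(\phi,d,\epsilon)$-expander if every $\Phi\subset X$ with $|\Phi|\le\phi$ satisfies $|N(\Phi)|\ge(1-\epsilon)d|\Phi|$, where $N(\Phi)\subset Y$ is the set of neighbours of $\Phi$. For $S\subset\{1,\dots,n\}$ and $\mathbf{x}\in\mathbb{R}^n$, $\mathbf{x}_S\in\mathbb{R}^n$ is the vector with $(x_S)_i=x_i$ for $i\in S$ and $0$ otherwise; $S^c$ is the complement of $S$ in $\{1,\dots,n\}$. *)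

theory Defs
  imports Complex_Main
begin

text \<open>Bipartite graph G(X,Y,H): left vertices X, right vertices Y, edges H \<subseteq> X \<times> Y.\<close>

definition nbhd :: "('a \<times> 'b) set \<Rightarrow> 'a set \<Rightarrow> 'b set" where
  "nbhd H Phi = {y. \<exists>x\<in>Phi. (x, y) \<in> H}"

definition left_regular :: "'a set \<Rightarrow> 'b set \<Rightarrow> ('a \<times> 'b) set \<Rightarrow> nat \<Rightarrow> bool" where
  "left_regular X Y H d \<longleftrightarrow> H \<subseteq> X \<times> Y \<and> (\<forall>x\<in>X. card {y\<in>Y. (x, y) \<in> H} = d)"

definition expander :: "'a set \<Rightarrow> 'b set \<Rightarrow> ('a \<times> 'b) set \<Rightarrow> nat \<Rightarrow> nat \<Rightarrow> real \<Rightarrow> bool" where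
  "expander X Y H phi d eps \<longleftrightarrow> left_regular X Y H d \<and>
     (\<forall>Phi. Phi \<subseteq> X \<and> card Phi \<le> phi \<longrightarrow>
        real (card (nbhd H Phi)) \<ge> (1 - eps) * real d * real (card Phi))"

text \<open>Bi-adjacency matrix: entry (i,j) for right vertex i and left vertex j.\<close>
definition biadj :: "(nat \<times> nat) set \<Rightarrow> nat \<Rightarrow> nat \<Rightarrow> real" where
  "biadj H i j = (if (j, i) \<in> H then 1 else 0)"

definition mat_vec :: "nat \<Rightarrow> (nat \<Rightarrow> nat \<Rightarrow> real) \<Rightarrow> (nat \<Rightarrow> real) \<Rightarrow> nat \<Rightarrow> real" where
  "mat_vec n A w = (\<lambda>i. \<Sum>j=1..n. A i j * w j)"

definition vrestrict :: "nat set \<Rightarrow> (nat \<Rightarrow> real) \<Rightarrow> nat \<Rightarrow> real" where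
  "vrestrict S x = (\<lambda>k. if k \<in> S then x k else 0)"

definition l1norm :: "nat \<Rightarrow> (nat \<Rightarrow> real) \<Rightarrow> real" where
  "l1norm n x = (\<Sum>k=1..n. \<bar>x k\<bar>)"

end

theory Submission
  imports Defs
begin

theorem lemma1:
  fixes n m d :: nat and eps :: real and H :: "(nat \<times> nat) set"
    and w :: "nat \<Rightarrow> real" and i :: nat
  assumes "expander {1..n} {1..m} H 2 d eps"
    and "d \<ge> 1"
    and "eps \<le> 1/4"
    and "\<forall>r\<in>{1..m}. mat_vec n (biadj H) w r = 0"
    and "i \<in> {1..n}"
  shows "l1norm n (vrestrict {i} w) \<le> 2 * eps * l1norm n (vrestrict ({1..n} - {i}) w)"
proof -
  define N where "N x = {y\<in>{1..m}. (x, y) \<in> H}" for x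
  have HX: "H \<subseteq> {1..n} \<times> {1..m}" and cN: "\<And>x. x \<in> {1..n} \<Longrightarrow> card (N x) = d"
    using assms(1) unfolding expander_def left_regular_def N_def by auto
  have exp: "\<And>Phi. Phi \<subseteq> {1..n} \<Longrightarrow> card Phi \<le> 2 \<Longrightarrow>
        real (card (nbhd H Phi)) \<ge> (1 - eps) * real d * real (card Phi)"
    using assms(1) unfolding expander_def by auto
  have finN: "finite (N x)" for x unfolding N_def by auto
  have inter: "real (card (N i \<inter> N j)) \<le> 2 * eps * d" if j: "j \<in> {1..n} - {i}" for j
  proof -
    have "nbhd H {i, j} = N i \<union> N j" using HX unfolding nbhd_def N_def by auto
    moreover have "card {i,j} = 2" using j by auto
    ultimately have "real (card (N i \<union> N j)) \<ge> (1 - eps) * real d * 2"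
      using exp[of "{i,j}"] j assms(5) by auto
    moreover have "card (N i \<union> N j) + card (N i \<inter> N j) = card (N i) + card (N j)"
      using card_Un_Int[OF finN finN] by simp
    moreover have "card (N i) = d" "card (N j) = d" using cN j assms(5) by auto
    ultimately show ?thesis by (simp add: algebra_simps)
  qed
  have row: "\<bar>w i\<bar> \<le> (\<Sum>j\<in>{1..n} - {i}. biadj H r j * \<bar>w j\<bar>)" if r: "r \<in> N i" for r
  proof -
    have rm: "r \<in> {1..m}" "(i, r) \<in> H" using r unfolding N_def by auto
    have "0 = (\<Sum>j=1..n. biadj H r j * w j)" using assms(4) rm unfolding mat_vec_def by auto
    also have "\<dots> = biadj H r i * w i + (\<Sum>j\<in>{1..n} - {i}. biadj H r j * w j)"
      using assms(5) by (simp add: sum.remove)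
    also have "biadj H r i = 1" using rm unfolding biadj_def by auto
    finally have "\<bar>w i\<bar> = \<bar>\<Sum>j\<in>{1..n} - {i}. biadj H r j * w j\<bar>" by linarith
    also have "\<dots> \<le> (\<Sum>j\<in>{1..n} - {i}. \<bar>biadj H r j * w j\<bar>)" by (rule sum_abs)
    also have "\<dots> = (\<Sum>j\<in>{1..n} - {i}. biadj H r j * \<bar>w j\<bar>)"
      by (rule sum.cong) (auto simp: biadj_def abs_mult)
    finally show ?thesis .
  qed
  have cnt: "(\<Sum>r\<in>N i. biadj H r j) = real (card (N i \<inter> N j))" for j
  proof -
    have "(\<Sum>r\<in>N i. biadj H r j) = (\<Sum>r\<in>N i. if r \<in> N i \<inter> N j then 1 else 0)"
      by (rule sum.cong) (auto simp: biadj_def N_def)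
    also have "\<dots> = real (card (N i \<inter> N j))"
      using finN by (simp add: sum.If_cases Int_absorb1 Int_assoc[symmetric] Int_commute)
    finally show ?thesis .
  qed
  have "real d * \<bar>w i\<bar> = (\<Sum>r\<in>N i. \<bar>w i\<bar>)" using cN assms(5) by simp
  also have "\<dots> \<le> (\<Sum>r\<in>N i. \<Sum>j\<in>{1..n} - {i}. biadj H r j * \<bar>w j\<bar>)"
    by (rule sum_mono) (rule row)
  also have "\<dots> = (\<Sum>j\<in>{1..n} - {i}. (\<Sum>r\<in>N i. biadj H r j) * \<bar>w j\<bar>)"
    by (subst sum.swap) (simp add: sum_distrib_right)
  also have "\<dots> \<le> (\<Sum>j\<in>{1..n} - {i}. (2 * eps * d) * \<bar>w j\<bar>)"
    by (rule sum_mono) (simp add: cnt inter mult_right_mono)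
  also have "\<dots> = real d * (2 * eps * (\<Sum>j\<in>{1..n} - {i}. \<bar>w j\<bar>))"
    by (simp add: sum_distrib_left algebra_simps)
  finally have main: "\<bar>w i\<bar> \<le> 2 * eps * (\<Sum>j\<in>{1..n} - {i}. \<bar>w j\<bar>)"
    using assms(2) by (simp add: mult_le_cancel_left_pos)
  have L: "l1norm n (vrestrict {i} w) = \<bar>w i\<bar>"
  proof -
    have "(\<Sum>k=1..n. \<bar>vrestrict {i} w k\<bar>) = (\<Sum>k=1..n. if k = i then \<bar>w k\<bar> else 0)"
      by (rule sum.cong) (auto simp: vrestrict_def)
    also have "\<dots> = \<bar>w i\<bar>" using assms(5) by (simp add: sum.delta)
    finally show ?thesis unfolding l1norm_def .
  qed
  have R: "l1norm n (vrestrict ({1..n} - {i}) w) = (\<Sum>j\<in>{1..n} - {i}. \<bar>w j\<bar>)"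
  proof -
    have "(\<Sum>k=1..n. \<bar>vrestrict ({1..n} - {i}) w k\<bar>) = (\<Sum>k\<in>{1..n}. if k \<in> {1..n} - {i} then \<bar>w k\<bar> else 0)"
      by (rule sum.cong) (auto simp: vrestrict_def)
    also have "\<dots> = (\<Sum>j\<in>{1..n} - {i}. \<bar>w j\<bar>)"
      by (simp add: sum.If_cases Int_absorb1 Diff_subset) (rule sum.cong; auto)
    finally show ?thesis unfolding l1norm_def .
  qed
  show ?thesis using main L R by simp
qed

end
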